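(* Let $G=A(n,\theta)$ with $n\ge3$ odd. For each $x\in G\setminus Z(G)$, the subgroup $[x,G]=\langle x^{-1}g^{-1}xg : g\in G\rangle$ is a maximal subgroup of $Z(G)$ (i.e. of index $2$). Every maximal subgroup of $Z(G)$ is of the form $[x,G]$ for some $x\in G\setminus Z(G)$, and for $x,x'\in G\setminus Z(G)$ we have $[x,G]=[x',G]$ if and only if $xZ(G)=x'Z(G)$.
   Context: Let $n=2m+1$ be odd, $\mathbb{F}_{2^n}$ the field with $2^n$ elements, $\theta$ a generator of $\mathrm{Gal}(\mathbb{F}_{2^n}/\mathbb{F}_2)$, $a^\theta$ the image of $a$ under $\theta$. $G=A(n,\theta)$ is the group of matrices $\begin{bmatrix}1&a&b\\0&1&a^\theta\\0&0&1\end{bmatrix}$, $a,b\in\mathbb{F}_{2^n}$, denoted $(a,b)$, with $(a,b)(c,d)=(a+c,\,b+d+ac^\theta)$. $Z(G)$ is the center of $G$ (an elementary abelian $2$-group of order $2^n$). *)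

theory Defs
  imports "HOL-Algebra.Algebra"
begin

text \<open>Field automorphisms of a field (type-class field), and generators of the
  Galois group Gal(F/F_2) (= the group of all field automorphisms of a finite
  field of characteristic 2).\<close>

definition field_aut :: "('a::field \<Rightarrow> 'a) \<Rightarrow> bool" where
  "field_aut \<sigma> \<longleftrightarrow> bij \<sigma> \<and> (\<forall>x y. \<sigma> (x + y) = \<sigma> x + \<sigma> y) \<and> (\<forall>x y. \<sigma> (x * y) = \<sigma> x * \<sigma> y)"

definition gal_generator :: "('a::field \<Rightarrow> 'a) \<Rightarrow> bool" where
  "gal_generator \<theta> \<longleftrightarrow> field_aut \<theta> \<and> (\<forall>\<sigma>. field_aut \<sigma> \<longrightarrow> (\<exists>k::nat. \<sigma> = (\<theta> ^^ k)))"

text \<open>The group A(n,theta): the matrix [[1,a,b],[0,1,a^theta],[0,0,1]] is written (a,b),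
  with (a,b)(c,d) = (a+c, b+d+a c^theta).\<close>

definition A_grp :: "('a::field \<Rightarrow> 'a) \<Rightarrow> ('a \<times> 'a) monoid" where
  "A_grp \<theta> = \<lparr> carrier = UNIV,
      monoid.mult = (\<lambda>(a, b) (c, d). (a + c, b + d + a * \<theta> c)),
      one = (0, 0) \<rparr>"

definition center :: "('g, 'b) monoid_scheme \<Rightarrow> 'g set" where
  "center G = {z \<in> carrier G. \<forall>g \<in> carrier G. z \<otimes>\<^bsub>G\<^esub> g = g \<otimes>\<^bsub>G\<^esub> z}"

definition comm_sub :: "('g, 'b) monoid_scheme \<Rightarrow> 'g \<Rightarrow> 'g set" where
  "comm_sub G x = generate G {inv\<^bsub>G\<^esub> x \<otimes>\<^bsub>G\<^esub> inv\<^bsub>G\<^esub> g \<otimes>\<^bsub>G\<^esub> x \<otimes>\<^bsub>G\<^esub> g | g. g \<in> carrier G}"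

definition maximal_subgroup_of :: "'g set \<Rightarrow> 'g set \<Rightarrow> ('g, 'b) monoid_scheme \<Rightarrow> bool" where
  "maximal_subgroup_of H K G \<longleftrightarrow> subgroup H G \<and> H \<subseteq> K \<and> H \<noteq> K \<and>
     (\<forall>L. subgroup L G \<and> H \<subseteq> L \<and> L \<subseteq> K \<longrightarrow> L = H \<or> L = K)"

end

theory Submission
  imports Defs "HOL-Number_Theory.Residues" "HOL-Analysis.Analysis"
begin


lemma char2:
  assumes "card (UNIV :: 'a::{field,finite} set) = 2 ^ n" "n \<ge> 1"
  shows "(1::'a) + 1 = 0"
proof -
  have pos: "CHAR('a) > 0" by (simp add: finite_imp_CHAR_pos)
  have pr: "Factorial_Ring.prime CHAR('a)" using prime_CHAR_semidom[OF pos] .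
  have "CHAR('a) dvd 2 ^ n" using CHAR_dvd_CARD[where 'a='a] assms by simp
  then have "CHAR('a) dvd 2" using pr prime_dvd_power by blast
  then have "CHAR('a) = 2" using pr using primes_dvd_imp_eq[OF pr two_is_prime_nat] by simp
  then have "of_nat 2 = (0::'a)" by (metis of_nat_CHAR)
  then show ?thesis by simp
qed

lemma c2_self: "(1::'a::field) + 1 = 0 \<Longrightarrow> x + x = (0::'a)"
  by (metis distrib_left mult.right_neutral mult_zero_right)

lemma c2_neg: "(1::'a::field) + 1 = 0 \<Longrightarrow> - x = (x::'a)"
  by (metis add_eq_0_iff c2_self)

lemma c2_cancel: "(1::'a::field) + 1 = 0 \<Longrightarrow> x + (x + y) = (y::'a)"
  by (metis add.assoc add_0 c2_self)

lemma aut_add: "field_aut t \<Longrightarrow> t (x + y) = t x + t y" by (simp add: field_aut_def)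
lemma aut_mult: "field_aut t \<Longrightarrow> t (x * y) = t x * t y" by (simp add: field_aut_def)
lemma aut_inj: "field_aut t \<Longrightarrow> t x = t y \<Longrightarrow> x = y"
  by (simp add: field_aut_def bij_def inj_def)
lemma aut_0: "field_aut t \<Longrightarrow> t 0 = 0"
  by (metis add_cancel_right_right add_0 aut_add)
lemma aut_1: "field_aut (t::'a::field\<Rightarrow>'a) \<Longrightarrow> t 1 = 1"
proof -
  assume a: "field_aut t"
  have "t 1 = t 1 * t 1" using aut_mult[OF a, of 1 1] by simp
  moreover have "t 1 \<noteq> 0" using aut_0[OF a] aut_inj[OF a, of 1 0] by auto
  ultimately show ?thesis by (metis mult_cancel_left1)
qed
lemma aut_eq0: "field_aut t \<Longrightarrow> t x = 0 \<longleftrightarrow> x = 0"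
  using aut_0 aut_inj by metis
lemma aut_inverse: "field_aut (t::'a::field\<Rightarrow>'a) \<Longrightarrow> t (inverse x) = inverse (t x)"
proof (cases "x = 0")
  case True
  assume "field_aut t" then show ?thesis using True aut_0[of t] by simp
next
  case False
  assume a: "field_aut t"
  have "t x * t (inverse x) = 1" using aut_mult[OF a, of x "inverse x"] aut_1[OF a] False by simp
  then show ?thesis by (metis inverse_unique)
qed
lemma aut_divide: "field_aut (t::'a::field\<Rightarrow>'a) \<Longrightarrow> t (x / y) = t x / t y"
  by (simp add: divide_inverse aut_mult aut_inverse)

lemma frob_aut:
  assumes c2: "(1::'a::{field,finite}) + 1 = 0"
  shows "field_aut (\<lambda>x::'a. x ^ 2)"
proof -
  have add: "(x + y) ^ 2 = x ^ 2 + y ^ 2" for x y :: 'a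
  proof -
    have "(x + y) ^ 2 = x^2 + y^2 + (x*y + x*y)" by (simp add: power2_eq_square algebra_simps)
    then show ?thesis using c2_self[OF c2] by simp
  qed
  have "inj (\<lambda>x::'a. x ^ 2)"
  proof (rule injI)
    fix x y :: 'a assume "x^2 = y^2"
    then have "(x + y) ^ 2 = 0" using add c2_self[OF c2] by simp
    then have "x + y = 0" by simp
    then show "x = y" using c2_neg[OF c2] by (metis add_eq_0_iff)
  qed
  then have "bij (\<lambda>x::'a. x ^ 2)" by (simp add: bij_def finite_UNIV_inj_surj)
  then show ?thesis unfolding field_aut_def using add by (simp add: power_mult_distrib)
qed

lemma gen_frob:
  assumes "gal_generator t" "(1::'a::{field,finite}) + 1 = 0"
  shows "\<exists>k. (\<lambda>x::'a. x ^ 2) = t ^^ k"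
  using assms frob_aut unfolding gal_generator_def by blast

lemma fixed01:
  fixes t :: "'a::{field,finite} \<Rightarrow> 'a"
  assumes g: "gal_generator t" and c2: "(1::'a::{field,finite}) + 1 = 0" and tc: "t c = c"
  shows "c = 0 \<or> c = 1"
proof -
  obtain k where k: "(\<lambda>x::'a. x ^ 2) = t ^^ k" using gen_frob[OF g c2] by blast
  have "(t ^^ m) c = c" for m by (induction m) (simp_all add: tc)
  then have "c ^ 2 = c" using fun_cong[OF k, of c] by simp
  then have "c * (c - 1) = 0" by (simp add: power2_eq_square algebra_simps)
  then show ?thesis by auto
qed



lemma fermat:
  fixes x :: "'a::{field,finite}"
  assumes "x \<noteq> 0"
  shows "x ^ (card (UNIV::'a set) - 1) = 1"
proof -
  let ?S = "UNIV - {0::'a}"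
  have inj: "inj_on (\<lambda>y. x * y) ?S" using assms by (auto simp: inj_on_def)
  have img: "(\<lambda>y. x * y) ` ?S = ?S"
  proof
    show "(\<lambda>y. x * y) ` ?S \<subseteq> ?S" using assms by auto
    show "?S \<subseteq> (\<lambda>y. x * y) ` ?S"
    proof
      fix z assume z: "z \<in> ?S"
      have "z = x * (z / x)" using assms by simp
      moreover have "z / x \<in> ?S" using z assms by simp
      ultimately show "z \<in> (\<lambda>y. x * y) ` ?S" by (rule image_eqI)
    qed
  qed
  have bij: "bij_betw (\<lambda>y. x * y) ?S ?S" using inj img by (simp add: bij_betw_def)
  have "(\<Prod>y\<in>?S. y) = (\<Prod>y\<in>?S. x * y)"
    using prod.reindex_bij_betw[OF bij, of "\<lambda>y. y"] by simp
  also have "\<dots> = x ^ card ?S * (\<Prod>y\<in>?S. y)" by (simp add: prod.distrib)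
  finally have e: "(\<Prod>y\<in>?S. y) = x ^ card ?S * (\<Prod>y\<in>?S. y)" .
  have "(\<Prod>y\<in>?S. y) \<noteq> 0" by simp
  then have "x ^ card ?S = 1" using e by simp
  moreover have "card ?S = card (UNIV::'a set) - 1" by (simp add: card_Diff_singleton)
  ultimately show ?thesis by simp
qed

lemma pow4_mod3: "(4::nat) ^ m mod 3 = 1"
proof (induction m)
  case (Suc m)
  have "(4::nat) ^ Suc m mod 3 = (4 * (4 ^ m mod 3)) mod 3" by (simp add: mod_mult_right_eq)
  then show ?case using Suc by simp
qed simp

lemma norm_one:
  fixes t :: "'a::{field,finite} \<Rightarrow> 'a"
  assumes card: "card (UNIV :: 'a set) = 2 ^ n" and odd: "odd n"
    and g: "gal_generator t" and c2: "(1::'a) + 1 = 0" and nu: "t u * u = 1"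
  shows "u = 1"
proof -
  have fa: "field_aut t" using g gal_generator_def by blast
  have u0: "u \<noteq> 0" using nu by auto
  have tu: "t u = inverse u" using nu by (metis inverse_unique mult.commute)
  obtain k where k: "(\<lambda>x::'a. x ^ 2) = t ^^ k" using gen_frob[OF g c2] by blast
  have "(t ^^ m) u = u \<or> (t ^^ m) u = inverse u" for m
  proof (induction m)
    case (Suc m)
    then show ?case using tu aut_inverse[OF fa, of u] by auto
  qed simp
  then have "u ^ 2 = u \<or> u ^ 2 = inverse u" using fun_cong[OF k, of u] by simp
  then show ?thesis
  proof
    assume "u ^ 2 = u" then show ?thesis using u0 by (simp add: power2_eq_square)
  next
    assume h: "u ^ 2 = inverse u"
    then have u3: "u ^ 3 = 1" using u0
      by (metis mult.commute power_Suc2 numeral_3_eq_3 right_inverse numeral_2_eq_2)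
    obtain m where m: "n = 2 * m + 1" using odd oddE by blast
    have "(2::nat) ^ n = 2 * 4 ^ m" using m by (simp add: power_mult)
    moreover have "(4::nat) ^ m = 3 * (4 ^ m div 3) + 1" using pow4_mod3[of m] by (metis div_mult_mod_eq mult.commute)
    ultimately have "(2::nat) ^ n - 1 = 3 * (2 * (4 ^ m div 3)) + 1" by linarith
    moreover have "u ^ (3 * q) = 1" for q using u3 by (simp add: power_mult)
    ultimately have "u ^ ((2::nat) ^ n - 1) = u" by (metis power_Suc2 Suc_eq_plus1 mult_1)
    then show ?thesis using fermat[OF u0] card by simp
  qed
qed



definition ff :: "('a::field \<Rightarrow> 'a) \<Rightarrow> 'a \<Rightarrow> 'a \<Rightarrow> 'a" where
  "ff t a c = a * t c + c * t a"

definition Imf :: "('a::field \<Rightarrow> 'a) \<Rightarrow> 'a \<Rightarrow> 'a set" where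
  "Imf t a = range (ff t a)"

definition P2 :: "'a::field set \<Rightarrow> bool" where
  "P2 H \<longleftrightarrow> 0 \<in> H \<and> (\<forall>x\<in>H. \<forall>y\<in>H. x + y \<in> H) \<and> (\<forall>x y. x \<notin> H \<longrightarrow> y \<notin> H \<longrightarrow> x + y \<in> H)"

lemma c2_eq: "(1::'a::field) + 1 = 0 \<Longrightarrow> x + y = 0 \<longleftrightarrow> x = (y::'a)"
  by (metis add_eq_0_iff c2_neg)

lemma ff_add: "field_aut t \<Longrightarrow> ff t a (c + d) = ff t a c + ff t a d"
  by (simp add: ff_def aut_add algebra_simps)

lemma ff_ker:
  fixes t :: "'a::{field,finite} \<Rightarrow> 'a"
  assumes g: "gal_generator t" and c2: "(1::'a) + 1 = 0" and a: "a \<noteq> 0"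
  shows "ff t a c = 0 \<longleftrightarrow> c = 0 \<or> c = a"
proof
  have fa: "field_aut t" using g gal_generator_def by blast
  assume "ff t a c = 0"
  then have e: "a * t c = c * t a" unfolding ff_def using c2_eq[OF c2] by blast
  show "c = 0 \<or> c = a"
  proof (cases "c = 0")
    case False
    have ta: "t a \<noteq> 0" using aut_eq0[OF fa] a by blast
    have "t (c / a) = c / a" using e ta a by (simp add: aut_divide[OF fa] field_simps)
    then have "c / a = 0 \<or> c / a = 1" using fixed01[OF g c2] by blast
    then show ?thesis using a False by auto
  qed simp
next
  assume "c = 0 \<or> c = a"
  then show "ff t a c = 0"
  proof
    assume "c = 0" then show ?thesis
      using g gal_generator_def aut_0 by (fastforce simp: ff_def)
  next
    assume "c = a" then show ?thesis by (metis c2_self[OF c2] mult.commute ff_def)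
  qed
qed

lemma ff_fiber:
  fixes t :: "'a::{field,finite} \<Rightarrow> 'a"
  assumes g: "gal_generator t" and c2: "(1::'a) + 1 = 0" and a: "a \<noteq> 0"
  shows "ff t a d = ff t a c \<longleftrightarrow> d = c \<or> d = c + a"
proof -
  have fa: "field_aut t" using g gal_generator_def by blast
  have "ff t a d = ff t a c \<longleftrightarrow> ff t a (d + c) = 0"
    using ff_add[OF fa] c2_eq[OF c2] by metis
  also have "\<dots> \<longleftrightarrow> d + c = 0 \<or> d + c = a" using ff_ker[OF g c2 a] by blast
  also have "\<dots> \<longleftrightarrow> d = c \<or> d = c + a"
    using c2_eq[OF c2] c2_cancel[OF c2] by (metis add.commute)
  finally show ?thesis .
qed

lemma Imf_card:
  fixes t :: "'a::{field,finite} \<Rightarrow> 'a"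
  assumes g: "gal_generator t" and c2: "(1::'a) + 1 = 0" and a: "a \<noteq> 0"
  shows "card (UNIV::'a set) = 2 * card (Imf t a)"
proof -
  let ?A = "\<lambda>y. {c. ff t a c = y}"
  have U: "UNIV = (\<Union>y\<in>Imf t a. ?A y)" by (auto simp: Imf_def)
  have "card (\<Union>y\<in>Imf t a. ?A y) = (\<Sum>y\<in>Imf t a. card (?A y))"
    by (rule card_UN_disjoint) auto
  also have "\<dots> = (\<Sum>y\<in>Imf t a. 2)"
  proof (rule sum.cong)
    fix y assume "y \<in> Imf t a"
    then obtain c where c: "y = ff t a c" by (auto simp: Imf_def)
    have "?A y = {c, c + a}" using ff_fiber[OF g c2 a] c by auto
    moreover have "c \<noteq> c + a" using a by simp
    ultimately show "card (?A y) = 2" by simp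
  qed simp
  finally show ?thesis using U by simp
qed

lemma idx2:
  fixes I :: "'a::{field,finite} set"
  assumes c2: "(1::'a) + 1 = 0" and z: "0 \<in> I" and cl: "\<forall>x\<in>I. \<forall>y\<in>I. x + y \<in> I"
    and cd: "card (UNIV::'a set) = 2 * card I"
  shows "P2 I"
  unfolding P2_def
proof (intro conjI z cl allI impI)
  fix u v assume u: "u \<notin> I" and v: "v \<notin> I"
  have disj: "I \<inter> (\<lambda>w. u + w) ` I = {}"
  proof (rule ccontr)
    assume "I \<inter> (\<lambda>w. u + w) ` I \<noteq> {}"
    then obtain w where w: "w \<in> I" "u + w \<in> I" by auto
    then have "(u + w) + w \<in> I" using cl by blast
    moreover have "(u + w) + w = u" by (metis add.assoc c2_self[OF c2] add_0_right)
    ultimately show False using u by simp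
  qed
  have "card ((\<lambda>w. u + w) ` I) = card I" by (rule card_image) (simp add: inj_on_def)
  then have "card (I \<union> (\<lambda>w. u + w) ` I) = card (UNIV::'a set)"
    using disj cd by (simp add: card_Un_disjoint)
  then have "I \<union> (\<lambda>w. u + w) ` I = UNIV" by (simp add: card_subset_eq)
  then have "v \<in> (\<lambda>w. u + w) ` I" using v by blast
  then obtain w where "w \<in> I" "v = u + w" by auto
  then show "u + v \<in> I" by (metis c2_cancel[OF c2])
qed

lemma Imf_P2:
  fixes t :: "'a::{field,finite} \<Rightarrow> 'a"
  assumes g: "gal_generator t" and c2: "(1::'a) + 1 = 0" and a: "a \<noteq> 0"
  shows "P2 (Imf t a)"
proof -
  have fa: "field_aut t" using g gal_generator_def by blast
  have "ff t a 0 = 0" using ff_ker[OF g c2 a, of 0] by simp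
  then have "0 \<in> Imf t a" unfolding Imf_def by (metis rangeI)
  moreover have "\<forall>x\<in>Imf t a. \<forall>y\<in>Imf t a. x + y \<in> Imf t a"
  proof (intro ballI)
    fix x y assume "x \<in> Imf t a" "y \<in> Imf t a"
    then obtain c d where "x = ff t a c" "y = ff t a d" by (auto simp: Imf_def)
    then have "x + y = ff t a (c + d)" using ff_add[OF fa] by simp
    then show "x + y \<in> Imf t a" by (simp add: Imf_def)
  qed
  ultimately show ?thesis using idx2[OF c2] Imf_card[OF g c2 a] by blast
qed

lemma Imf_scale:
  fixes t :: "'a::{field,finite} \<Rightarrow> 'a"
  assumes fa: "field_aut t" and a: "a \<noteq> 0"
  shows "Imf t a = (\<lambda>w. (a * t a) * w) ` Imf t 1"
proof -
  have ta: "t a \<noteq> 0" using aut_eq0[OF fa] a by blast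
  have key: "ff t a (a * s) = (a * t a) * ff t 1 s" for s
    by (simp add: ff_def aut_mult[OF fa] aut_1[OF fa] algebra_simps)
  show ?thesis
  proof
    show "Imf t a \<subseteq> (\<lambda>w. (a * t a) * w) ` Imf t 1"
    proof
      fix y assume "y \<in> Imf t a"
      then obtain c where c: "y = ff t a c" by (auto simp: Imf_def)
      have "c = a * (c / a)" using a by simp
      then have "y = (a * t a) * ff t 1 (c / a)" using key c by metis
      then show "y \<in> (\<lambda>w. (a * t a) * w) ` Imf t 1" by (auto simp: Imf_def)
    qed
    show "(\<lambda>w. (a * t a) * w) ` Imf t 1 \<subseteq> Imf t a"
      using key by (auto simp: Imf_def) (metis rangeI)
  qed
qed



lemma stab_aux:
  fixes W :: "'a::{field,finite} set"
  assumes nu: "\<nu> \<noteq> 0" and sub: "(\<lambda>w. \<nu> * w) ` W \<subseteq> W" and u: "\<nu> * u \<in> W"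
  shows "u \<in> W"
proof -
  have "card ((\<lambda>w. \<nu> * w) ` W) = card W" by (rule card_image) (simp add: inj_on_def nu)
  then have "(\<lambda>w. \<nu> * w) ` W = W" using sub by (simp add: card_subset_eq)
  then have "\<nu> * u \<in> (\<lambda>w. \<nu> * w) ` W" using u by simp
  then obtain w where "w \<in> W" "\<nu> * u = \<nu> * w" by blast
  then show ?thesis using nu by simp
qed

lemma stab:
  fixes W :: "'a::{field,finite} set"
  assumes c2: "(1::'a) + 1 = 0" and P: "P2 W" and nU: "W \<noteq> UNIV" and l: "l \<noteq> 0" and l': "l' \<noteq> 0"
    and eq: "(\<lambda>w. l * w) ` W = (\<lambda>w. l' * w) ` W"
  shows "l = l'"
proof (rule ccontr)
  assume ne: "l \<noteq> l'"
  define \<mu> where "\<mu> = l / l'"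
  have mu0: "\<mu> \<noteq> 0" using l l' by (simp add: \<mu>_def)
  have mu1: "\<mu> + 1 \<noteq> 0"
  proof
    assume "\<mu> + 1 = 0"
    then have "\<mu> = 1" using c2_eq[OF c2] by blast
    then show False using ne l' by (simp add: \<mu>_def)
  qed
  have sub: "(\<lambda>w. \<mu> * w) ` W \<subseteq> W"
  proof
    fix x assume "x \<in> (\<lambda>w. \<mu> * w) ` W"
    then obtain w where w: "w \<in> W" "x = \<mu> * w" by auto
    then have "l * w \<in> (\<lambda>w. l' * w) ` W" using eq by blast
    then obtain w' where "w' \<in> W" "l * w = l' * w'" by auto
    then have "x = w'" using w l' by (simp add: \<mu>_def field_simps)
    then show "x \<in> W" using \<open>w' \<in> W\<close> by simp
  qed
  have sub1: "(\<lambda>w. (\<mu> + 1) * w) ` W \<subseteq> W"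
  proof
    fix x assume "x \<in> (\<lambda>w. (\<mu> + 1) * w) ` W"
    then obtain w where w: "w \<in> W" "x = (\<mu> + 1) * w" by auto
    then have "x = \<mu> * w + w" by (simp add: algebra_simps)
    moreover have "\<mu> * w \<in> W" using sub w by blast
    ultimately show "x \<in> W" using P w unfolding P2_def by blast
  qed
  obtain u where u: "u \<notin> W" using nU by blast
  have a1: "\<mu> * u \<notin> W" using stab_aux[OF mu0 sub] u by blast
  have a2: "(\<mu> + 1) * u \<notin> W" using stab_aux[OF mu1 sub1] u by blast
  have "\<mu> * u + u \<in> W" using P a1 u unfolding P2_def by blast
  then show False using a2 by (simp add: algebra_simps)
qed

lemma Imf_ne_UNIV:
  fixes t :: "'a::{field,finite} \<Rightarrow> 'a"
  assumes g: "gal_generator t" and c2: "(1::'a) + 1 = 0" and a: "a \<noteq> 0"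
  shows "Imf t a \<noteq> UNIV"
proof
  assume "Imf t a = UNIV"
  then have "card (UNIV::'a set) = 2 * card (UNIV :: 'a set)" using Imf_card[OF g c2 a] by simp
  then show False by simp
qed

lemma Imf_inj:
  fixes t :: "'a::{field,finite} \<Rightarrow> 'a"
  assumes card: "card (UNIV :: 'a set) = 2 ^ n" and odd: "odd n"
    and g: "gal_generator t" and c2: "(1::'a) + 1 = 0" and a: "a \<noteq> 0" and a': "a' \<noteq> 0"
    and eq: "Imf t a = Imf t a'"
  shows "a = a'"
proof -
  have fa: "field_aut t" using g gal_generator_def by blast
  have ta: "t a \<noteq> 0" "t a' \<noteq> 0" using aut_eq0[OF fa] a a' by blast+
  have "a * t a = a' * t a'"
    apply (rule stab[OF c2 Imf_P2[OF g c2 one_neq_zero] Imf_ne_UNIV[OF g c2 one_neq_zero]])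
    using a a' ta eq Imf_scale[OF fa a] Imf_scale[OF fa a'] by auto
  then have "t (a / a') * (a / a') = 1" using ta a a' by (simp add: aut_divide[OF fa] field_simps)
  then have "a / a' = 1" using norm_one[OF card odd g c2] by blast
  then show ?thesis using a' by simp
qed

definition sg :: "'a set \<Rightarrow> 'a \<Rightarrow> real" where
  "sg H i = (if i \<in> H then 1 else -1)"

definition chi :: "'a::finite set \<Rightarrow> real ^ 'a" where
  "chi H = (\<chi> i. sg H i)"

lemma sg_mult:
  fixes H :: "'a::field set"
  assumes c2: "(1::'a) + 1 = 0" and P: "P2 H"
  shows "sg H (x + y) = sg H x * sg H y"
proof -
  have c: "(x + y) + x = y" "(x + y) + y = x"
    by (metis c2_cancel[OF c2] add.commute add.assoc)+
  have cl: "\<forall>x\<in>H. \<forall>y\<in>H. x + y \<in> H" and ix: "\<forall>x y. x \<notin> H \<longrightarrow> y \<notin> H \<longrightarrow> x + y \<in> H"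
    using P unfolding P2_def by blast+
  show ?thesis
  proof (cases "x \<in> H")
    case True
    show ?thesis
    proof (cases "y \<in> H")
      case True
      then show ?thesis using \<open>x \<in> H\<close> cl by (simp add: sg_def)
    next
      case False
      have "x + y \<notin> H"
      proof
        assume "x + y \<in> H"
        then have "(x + y) + x \<in> H" using \<open>x \<in> H\<close> cl by blast
        then show False using c False by simp
      qed
      then show ?thesis using \<open>x \<in> H\<close> False by (simp add: sg_def)
    qed
  next
    case False
    show ?thesis
    proof (cases "y \<in> H")
      case True
      have "x + y \<notin> H"
      proof
        assume "x + y \<in> H"
        then have "(x + y) + y \<in> H" using True cl by blast
        then show False using c False by simp
      qed
      then show ?thesis using True False by (simp add: sg_def)
    next
      case F2: False
      then show ?thesis using False ix by (simp add: sg_def)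
    qed
  qed
qed

lemma sg_orth:
  fixes A :: "'a::{field,finite} set"
  assumes c2: "(1::'a) + 1 = 0" and PA: "P2 A" and PB: "P2 B" and ne: "A \<noteq> B"
  shows "(\<Sum>i\<in>UNIV. sg A i * sg B i) = 0"
proof -
  define \<psi> where "\<psi> i = sg A i * sg B i" for i
  have pm: "\<psi> (x + y) = \<psi> x * \<psi> y" for x y
    unfolding \<psi>_def using sg_mult[OF c2 PA] sg_mult[OF c2 PB] by simp
  obtain y where y: "(y \<in> A) \<noteq> (y \<in> B)" using ne by blast
  have py: "\<psi> y = -1" using y by (auto simp: \<psi>_def sg_def)
  have "(\<Sum>i\<in>UNIV. \<psi> i) = (\<Sum>i\<in>UNIV. \<psi> (i + y))"
  proof -
    have "bij (\<lambda>i. i + y)" by (simp add: bij_def inj_def surj_def)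
    then show ?thesis using sum.reindex_bij_betw[of "\<lambda>i. i + y" UNIV UNIV \<psi>] by simp
  qed
  also have "\<dots> = - (\<Sum>i\<in>UNIV. \<psi> i)" using pm py by (simp add: sum_negf)
  finally show ?thesis unfolding \<psi>_def by simp
qed

lemma count_P2:
  fixes M :: "'a::{field,finite} set set"
  assumes c2: "(1::'a) + 1 = 0" and P: "\<forall>H\<in>M. P2 H"
  shows "card M \<le> CARD('a)"
proof -
  have inj: "inj_on chi M"
  proof (rule inj_onI)
    fix A B assume "chi A = chi B"
    then have sgeq: "sg A i = sg B i" for i unfolding chi_def by (metis vec_lambda_beta)
    have "i \<in> A \<longleftrightarrow> i \<in> B" for i using sgeq[of i] unfolding sg_def by (auto split: if_splits)
    then show "A = B" by blast
  qed
  have orth: "pairwise orthogonal (chi ` M)"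
    unfolding pairwise_def
  proof (intro ballI impI)
    fix x y assume "x \<in> chi ` M" "y \<in> chi ` M" "x \<noteq> y"
    then obtain A B where AB: "A \<in> M" "B \<in> M" "x = chi A" "y = chi B" "A \<noteq> B" by auto
    show "orthogonal x y"
      unfolding orthogonal_def AB inner_vec_def chi_def
      using sg_orth[OF c2, of A B] P AB by simp
  qed
  have n0: "0 \<notin> chi ` M"
  proof
    assume "0 \<in> chi ` M"
    then obtain A :: "'a::{field,finite} set" where "chi A = 0" by auto
    then have "(chi A) $ undefined = 0" by simp
    then have "sg A undefined = 0" unfolding chi_def by simp
    then show False by (simp add: sg_def split: if_splits)
  qed
  have "card (chi ` M) \<le> CARD('a)"
    using independent_bound[OF pairwise_orthogonal_independent[OF orth n0]] by simp
  then show ?thesis using card_image[OF inj] by simp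
qed

lemma P2_UNIV: "P2 (UNIV :: 'a::field set)" by (simp add: P2_def)

lemma all_hyper:
  fixes t :: "'a::{field,finite} \<Rightarrow> 'a"
  assumes card: "card (UNIV :: 'a set) = 2 ^ n" and odd: "odd n"
    and g: "gal_generator t" and c2: "(1::'a) + 1 = 0"
    and P: "P2 H" and nU: "H \<noteq> UNIV"
  shows "\<exists>a. a \<noteq> 0 \<and> H = Imf t a"
proof (rule ccontr)
  assume no: "\<not> (\<exists>a. a \<noteq> 0 \<and> H = Imf t a)"
  let ?I = "Imf t ` (UNIV - {0})"
  let ?M = "insert UNIV (insert H ?I)"
  have cI: "card ?I = CARD('a) - 1"
  proof -
    have "inj_on (Imf t) (UNIV - {0})"
      by (rule inj_onI) (use Imf_inj[OF card odd g c2] in auto)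
    then show ?thesis by (simp add: card_image card_Diff_singleton)
  qed
  have nUI: "UNIV \<notin> ?I" using Imf_ne_UNIV[OF g c2] by auto
  have nHI: "H \<notin> ?I" using no by auto
  have "card ?M = CARD('a) + 1"
    using cI nUI nHI nU card by simp
  moreover have "Ball ?M P2" using P P2_UNIV Imf_P2[OF g c2] by auto
  ultimately show False using count_P2[OF c2, of ?M] by simp
qed



lemma A_mult [simp]: "(a, b) \<otimes>\<^bsub>A_grp t\<^esub> (c, d) = (a + c, b + d + a * t c)"
  by (simp add: A_grp_def)
lemma A_one [simp]: "\<one>\<^bsub>A_grp t\<^esub> = (0, 0)" by (simp add: A_grp_def)
lemma A_carrier [simp]: "carrier (A_grp t) = UNIV" by (simp add: A_grp_def)

lemma A_center_mem: "p \<in> center (A_grp t) \<longleftrightarrow> (\<forall>g. p \<otimes>\<^bsub>A_grp t\<^esub> g = g \<otimes>\<^bsub>A_grp t\<^esub> p)"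
  unfolding center_def by simp

lemma A_group:
  fixes t :: "'a::field \<Rightarrow> 'a"
  assumes fa: "field_aut t"
  shows "group (A_grp t)"
proof (rule groupI)
  fix x y z :: "'a \<times> 'a"
  show "x \<otimes>\<^bsub>A_grp t\<^esub> y \<otimes>\<^bsub>A_grp t\<^esub> z = x \<otimes>\<^bsub>A_grp t\<^esub> (y \<otimes>\<^bsub>A_grp t\<^esub> z)"
    by (cases x, cases y, cases z) (simp add: aut_add[OF fa] algebra_simps)
  show "\<one>\<^bsub>A_grp t\<^esub> \<otimes>\<^bsub>A_grp t\<^esub> x = x" by (cases x) simp
  show "\<exists>y\<in>carrier (A_grp t). y \<otimes>\<^bsub>A_grp t\<^esub> x = \<one>\<^bsub>A_grp t\<^esub>"
  proof (cases x)
    case (Pair a b)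
    show ?thesis
      by (rule bexI[of _ "(- a, - b + a * t a)"]) (simp_all add: Pair aut_add[OF fa] algebra_simps)
  qed
qed simp_all

lemma A_inv:
  fixes t :: "'a::field \<Rightarrow> 'a"
  assumes fa: "field_aut t" and c2: "(1::'a) + 1 = 0"
  shows "inv\<^bsub>A_grp t\<^esub> (a, b) = (a, b + a * t a)"
proof (rule group.inv_equality[OF A_group[OF fa]])
  show "(a, b + a * t a) \<otimes>\<^bsub>A_grp t\<^esub> (a, b) = \<one>\<^bsub>A_grp t\<^esub>"
  proof -
    have "b + a * t a + b + a * t a = (b + a * t a) + (b + a * t a)" by (simp only: add.assoc)
    then have "b + a * t a + b + a * t a = 0" using c2_self[OF c2] by simp
    moreover have "a + a = 0" using c2_self[OF c2] by simp
    ultimately show ?thesis by simp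
  qed
qed simp_all

lemma A_center:
  fixes t :: "'a::{field,finite} \<Rightarrow> 'a"
  assumes g: "gal_generator t" and c2: "(1::'a) + 1 = 0" and big: "card (UNIV::'a set) > 2"
  shows "center (A_grp t) = {p. fst p = 0}"
proof -
  have fa: "field_aut t" using g gal_generator_def by blast
  obtain c :: 'a where c: "c \<noteq> 0" "c \<noteq> 1"
  proof -
    have "UNIV \<noteq> {0::'a, 1}"
    proof
      assume h: "UNIV = {0::'a, 1}"
      have c2': "card {0::'a, 1} = 2" by simp
      have "card (UNIV::'a set) = 2" by (simp only: h c2')
      then show False using big by simp
    qed
    then show ?thesis using that by blast
  qed
  have tc: "t c \<noteq> c" using fixed01[OF g c2] c by blast
  show ?thesis
  proof (rule Set.set_eqI)
    fix p :: "'a \<times> 'a"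
    obtain a b where p: "p = (a, b)" by (cases p)
    show "p \<in> center (A_grp t) \<longleftrightarrow> p \<in> {p. fst p = 0}"
    proof
      assume "p \<in> center (A_grp t)"
      then have comm: "\<And>g. p \<otimes>\<^bsub>A_grp t\<^esub> g = g \<otimes>\<^bsub>A_grp t\<^esub> p" unfolding A_center_mem by blast
      have "(a + 1, b + 0 + a * t 1) = (1 + a, 0 + b + 1 * t a)" using comm[of "(1, 0)"] p by simp
      then have e1: "a * t 1 = 1 * t a" by simp
      have "(a + c, b + 0 + a * t c) = (c + a, 0 + b + c * t a)" using comm[of "(c, 0)"] p by simp
      then have e2: "a * t c = c * t a" by simp
      have "a = 0"
      proof (rule ccontr)
        assume a0: "a \<noteq> 0"
        have "t a = 1 * t a" by simp
        also have "\<dots> = a * t 1" using e1 by simp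
        also have "\<dots> = a" using aut_1[OF fa] by simp
        finally have ta: "t a = a" .
        have "a * t c = a * c" using e2 ta by (simp add: mult.commute)
        then have "t c = c" using a0 by simp
        then show False using tc by simp
      qed
      then show "p \<in> {p. fst p = 0}" using p by simp
    next
      assume "p \<in> {p. fst p = 0}"
      then have "a = 0" using p by simp
      have "p \<otimes>\<^bsub>A_grp t\<^esub> g = g \<otimes>\<^bsub>A_grp t\<^esub> p" for g
      proof (cases g)
        case (Pair c d)
        show ?thesis using p \<open>a = 0\<close> aut_0[OF fa] Pair by (simp add: add.commute add.left_commute)
      qed
      then show "p \<in> center (A_grp t)" unfolding A_center_mem by blast
    qed
  qed
qed



lemma A_comm:
  fixes t :: "'a::field \<Rightarrow> 'a"
  assumes fa: "field_aut t" and c2: "(1::'a) + 1 = 0"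
  shows "inv\<^bsub>A_grp t\<^esub> (a, b) \<otimes>\<^bsub>A_grp t\<^esub> inv\<^bsub>A_grp t\<^esub> (c, d) \<otimes>\<^bsub>A_grp t\<^esub> (a, b) \<otimes>\<^bsub>A_grp t\<^esub> (c, d)
     = (0, ff t a c)"
proof -
  have s: "\<And>x::'a. x + x = 0" using c2_self[OF c2] .
  have "a + c + a + c = 0" by (metis s add.assoc add.commute add.left_commute)
  moreover have "b + a * t a + (d + c * t c) + a * t c + b + (a + c) * t a + d + (a + c + a) * t c = ff t a c"
  proof -
    have "b + a * t a + (d + c * t c) + a * t c + b + (a + c) * t a + d + (a + c + a) * t c
      = (b + b) + (d + d) + (a * t a + a * t a) + (c * t c + c * t c) + (a * t c + a * t c) + (a * t c + c * t a)"
      by (simp add: algebra_simps)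
    also have "\<dots> = ff t a c" by (simp add: s ff_def)
    finally show ?thesis .
  qed
  ultimately show ?thesis by (simp add: A_inv[OF fa c2] add.assoc)
qed

lemma Zsub:
  fixes t :: "'a::field \<Rightarrow> 'a"
  assumes fa: "field_aut t" and c2: "(1::'a) + 1 = 0"
    and z: "(0::'a) \<in> S" and cl: "\<forall>x\<in>S. \<forall>y\<in>S. x + y \<in> S"
  shows "subgroup (Pair (0::'a) ` S) (A_grp t)"
proof (rule group.subgroupI[OF A_group[OF fa]])
  show "Pair (0::'a) ` S \<noteq> {}" using z by blast
  fix p assume "p \<in> Pair (0::'a) ` S"
  then show "inv\<^bsub>A_grp t\<^esub> p \<in> Pair (0::'a) ` S" using A_inv[OF fa c2] by auto
next
  fix p q assume "p \<in> Pair (0::'a) ` S" "q \<in> Pair (0::'a) ` S"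
  then show "p \<otimes>\<^bsub>A_grp t\<^esub> q \<in> Pair (0::'a) ` S" using cl by (auto simp: aut_0[OF fa])
qed simp

lemma A_comm_sub:
  fixes t :: "'a::{field,finite} \<Rightarrow> 'a"
  assumes g: "gal_generator t" and c2: "(1::'a) + 1 = 0"
  shows "comm_sub (A_grp t) (a, b) = Pair (0::'a) ` Imf t a"
proof -
  have fa: "field_aut t" using g gal_generator_def by blast
  have set: "{inv\<^bsub>A_grp t\<^esub> (a, b) \<otimes>\<^bsub>A_grp t\<^esub> inv\<^bsub>A_grp t\<^esub> g \<otimes>\<^bsub>A_grp t\<^esub> (a, b) \<otimes>\<^bsub>A_grp t\<^esub> g | g. g \<in> carrier (A_grp t)}
     = Pair (0::'a) ` Imf t a"
    (is "?S = _")
  proof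
    show "?S \<subseteq> Pair (0::'a) ` Imf t a"
    proof
      fix p assume "p \<in> ?S"
      then obtain c d where "p = inv\<^bsub>A_grp t\<^esub> (a, b) \<otimes>\<^bsub>A_grp t\<^esub> inv\<^bsub>A_grp t\<^esub> (c, d) \<otimes>\<^bsub>A_grp t\<^esub> (a, b) \<otimes>\<^bsub>A_grp t\<^esub> (c, d)"
        by auto
      then show "p \<in> Pair (0::'a) ` Imf t a" using A_comm[OF fa c2] by (simp add: Imf_def)
    qed
    show "Pair (0::'a) ` Imf t a \<subseteq> ?S"
    proof
      fix p assume "p \<in> Pair (0::'a) ` Imf t a"
      then obtain c where "p = (0, ff t a c)" by (auto simp: Imf_def)
      then have "p = inv\<^bsub>A_grp t\<^esub> (a, b) \<otimes>\<^bsub>A_grp t\<^esub> inv\<^bsub>A_grp t\<^esub> (c, 0) \<otimes>\<^bsub>A_grp t\<^esub> (a, b) \<otimes>\<^bsub>A_grp t\<^esub> (c, 0)"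
        using A_comm[OF fa c2] by simp
      then show "p \<in> ?S" by auto
    qed
  qed
  have sub: "subgroup (Pair (0::'a) ` Imf t a) (A_grp t)"
  proof (rule Zsub[OF fa c2])
    have "ff t a 0 = 0" by (simp add: ff_def aut_0[OF fa])
    then show "0 \<in> Imf t a" by (metis Imf_def rangeI)
    show "\<forall>x\<in>Imf t a. \<forall>y\<in>Imf t a. x + y \<in> Imf t a"
    proof (intro ballI)
      fix x y assume "x \<in> Imf t a" "y \<in> Imf t a"
      then obtain c d where "x = ff t a c" "y = ff t a d" by (auto simp: Imf_def)
      then have "x + y = ff t a (c + d)" using ff_add[OF fa] by simp
      then show "x + y \<in> Imf t a" by (simp add: Imf_def)
    qed
  qed
  show ?thesis
    unfolding comm_sub_def set
  proof
    show "generate (A_grp t) (Pair (0::'a) ` Imf t a) \<subseteq> Pair (0::'a) ` Imf t a"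
      by (rule group.generate_subgroup_incl[OF A_group[OF fa] _ sub]) simp
    show "Pair (0::'a) ` Imf t a \<subseteq> generate (A_grp t) (Pair (0::'a) ` Imf t a)"
      by (auto intro: generate.incl)
  qed
qed



theorem lemma3p1:
  fixes \<theta> :: "'a::{field, finite} \<Rightarrow> 'a" and n :: nat
  assumes "card (UNIV :: 'a set) = 2 ^ n" and "odd n" and "n \<ge> 3"
    and "gal_generator \<theta>"
  defines "G \<equiv> A_grp \<theta>"
  shows "(\<forall>x \<in> carrier G - center G.
            maximal_subgroup_of (comm_sub G x) (center G) G
            \<and> card (center G) = 2 * card (comm_sub G x))
       \<and> (\<forall>H. maximal_subgroup_of H (center G) G \<longrightarrow>
            (\<exists>x \<in> carrier G - center G. H = comm_sub G x))
       \<and> (\<forall>x \<in> carrier G - center G. \<forall>x' \<in> carrier G - center G.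
            comm_sub G x = comm_sub G x' \<longleftrightarrow> x <#\<^bsub>G\<^esub> center G = x' <#\<^bsub>G\<^esub> center G)"
proof -
  note card = assms(1) and odd = assms(2) and g = assms(4)
  have fa: "field_aut \<theta>" using g gal_generator_def by blast
  have c2: "(1::'a) + 1 = 0" using char2[OF card] assms(3) by simp
  have "(2::nat) ^ 3 \<le> 2 ^ n" using power_increasing[OF assms(3), of "2::nat"] by simp
  then have "(8::nat) \<le> 2 ^ n" by simp
  then have big: "card (UNIV::'a set) > 2" using card by linarith
  have Z: "center G = {p. fst p = 0}" unfolding G_def using A_center[OF g c2 big] .
  have Zimg: "center G = Pair (0::'a) ` UNIV"
  proof (rule Set.set_eqI)
    fix p :: "'a \<times> 'a"
    show "p \<in> center G \<longleftrightarrow> p \<in> Pair (0::'a) ` UNIV" by (cases p) (simp add: Z image_iff)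
  qed
  have ZE: "fst p = 0" if "p \<in> center G" for p using that unfolding Z by simp
  have ZI: "(0, w) \<in> center G" for w :: 'a unfolding Z by simp
  have cardZ: "card (center G) = card (UNIV::'a set)"
    unfolding Zimg by (rule card_image) (simp add: inj_on_def)
  have CS: "comm_sub G (a, b) = Pair (0::'a) ` Imf \<theta> a" for a b
    unfolding G_def using A_comm_sub[OF g c2] .
  have grp: "group G" unfolding G_def using A_group[OF fa] .
  have cardP: "card (Pair (0::'a) ` S) = card S" for S :: "'a set"
    by (rule card_image) (simp add: inj_on_def)
  have P1: "maximal_subgroup_of (Pair (0::'a) ` Imf \<theta> a) (center G) G
            \<and> card (center G) = 2 * card (Pair (0::'a) ` Imf \<theta> a)" if a: "a \<noteq> 0" for a
  proof
    let ?I = "Imf \<theta> a"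
    have PI: "P2 ?I" using Imf_P2[OF g c2 a] .
    have sub: "subgroup (Pair (0::'a) ` ?I) G"
    proof -
      have "(0::'a) \<in> ?I" "\<forall>x\<in>?I. \<forall>y\<in>?I. x + y \<in> ?I" using PI unfolding P2_def by blast+
      then show ?thesis unfolding G_def by (rule Zsub[OF fa c2])
    qed
    have nU: "?I \<noteq> UNIV" using Imf_ne_UNIV[OF g c2 a] .
    show "card (center G) = 2 * card (Pair (0::'a) ` ?I)"
      using cardZ cardP Imf_card[OF g c2 a] by simp
    show "maximal_subgroup_of (Pair (0::'a) ` ?I) (center G) G"
      unfolding maximal_subgroup_of_def
    proof (intro conjI allI impI)
      show "subgroup (Pair (0::'a) ` ?I) G" using sub .
      show "Pair (0::'a) ` ?I \<subseteq> center G" unfolding Z by auto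
      show "Pair (0::'a) ` ?I \<noteq> center G"
      proof
        assume eq: "Pair (0::'a) ` ?I = center G"
        have "w \<in> ?I" for w
        proof -
          have "(0, w) \<in> Pair (0::'a) ` ?I" unfolding eq by (rule ZI)
          then show ?thesis by auto
        qed
        then show False using nU by blast
      qed
      fix L assume L: "subgroup L G \<and> Pair (0::'a) ` ?I \<subseteq> L \<and> L \<subseteq> center G"
      show "L = Pair (0::'a) ` ?I \<or> L = center G"
      proof (cases "L = Pair (0::'a) ` ?I")
        case False
        then obtain q where q: "q \<in> L" "q \<notin> Pair (0::'a) ` ?I" using L by blast
        have "fst q = 0" using ZE q L by blast
        then obtain l where ql: "q = (0, l)" by (cases q) simp
        have lI: "l \<notin> ?I" using q ql by auto
        have "center G \<subseteq> L"
        proof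
          fix z assume "z \<in> center G"
          then have "fst z = 0" by (rule ZE)
          then obtain w where zw: "z = (0, w)" by (cases z) simp
          show "z \<in> L"
          proof (cases "w \<in> ?I")
            case True then show ?thesis using zw L by auto
          next
            case False
            then have "l + w \<in> ?I" using PI lI unfolding P2_def by blast
            then have "(0, l + w) \<in> L" using L by auto
            then have "(0, l) \<otimes>\<^bsub>G\<^esub> (0, l + w) \<in> L"
              using q ql L subgroup.m_closed by metis
            moreover have "(0, l) \<otimes>\<^bsub>G\<^esub> (0, l + w) = z"
              unfolding G_def using zw c2_cancel[OF c2] by simp
            ultimately show ?thesis by simp
          qed
        qed
        then show ?thesis using L by blast
      qed simp
    qed
  qed
  have nZ: "x \<in> carrier G - center G \<longleftrightarrow> fst x \<noteq> 0" for x unfolding Z by (simp add: G_def)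
  show ?thesis
  proof (intro conjI)
    show "\<forall>x \<in> carrier G - center G.
            maximal_subgroup_of (comm_sub G x) (center G) G
            \<and> card (center G) = 2 * card (comm_sub G x)"
    proof
      fix x assume "x \<in> carrier G - center G"
      then obtain a b where x: "x = (a, b)" "a \<noteq> 0" using nZ by (cases x) auto
      show "maximal_subgroup_of (comm_sub G x) (center G) G \<and> card (center G) = 2 * card (comm_sub G x)"
        using P1[OF x(2)] CS x(1) by simp
    qed
    show "\<forall>H. maximal_subgroup_of H (center G) G \<longrightarrow> (\<exists>x \<in> carrier G - center G. H = comm_sub G x)"
    proof (intro allI impI)
      fix H assume M: "maximal_subgroup_of H (center G) G"
      have sH: "subgroup H G" and HZ: "H \<subseteq> center G" and HnZ: "H \<noteq> center G"
        and mx: "\<And>L. subgroup L G \<Longrightarrow> H \<subseteq> L \<Longrightarrow> L \<subseteq> center G \<Longrightarrow> L = H \<or> L = center G"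
        using M unfolding maximal_subgroup_of_def by blast+
      define H' where "H' = snd ` H"
      have HH: "H = Pair (0::'a) ` H'"
      proof
        show "H \<subseteq> Pair (0::'a) ` H'"
        proof
          fix p assume "p \<in> H"
          moreover have "fst p = 0" using HZ ZE \<open>p \<in> H\<close> by blast
          ultimately show "p \<in> Pair (0::'a) ` H'" unfolding H'_def by (metis image_eqI prod.collapse)
        qed
        show "Pair (0::'a) ` H' \<subseteq> H"
        proof
          fix p assume "p \<in> Pair (0::'a) ` H'"
          then obtain q where q: "q \<in> H" "p = (0, snd q)" unfolding H'_def by auto
          have "fst q = 0" using HZ ZE q by blast
          then show "p \<in> H" using q by (metis prod.collapse)
        qed
      qed
      have mem: "(0, h) \<in> H \<longleftrightarrow> h \<in> H'" for h using HH by auto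
      have z0: "(0::'a) \<in> H'"
        using subgroup.one_closed[OF sH] mem unfolding G_def by simp
      have cl: "\<forall>x\<in>H'. \<forall>y\<in>H'. x + y \<in> H'"
      proof (intro ballI)
        fix x y assume "x \<in> H'" "y \<in> H'"
        then have "(0, x) \<otimes>\<^bsub>G\<^esub> (0, y) \<in> H" using mem subgroup.m_closed[OF sH] by simp
        then show "x + y \<in> H'" using mem unfolding G_def by (simp add: aut_0[OF fa])
      qed
      have ix: "\<forall>u v. u \<notin> H' \<longrightarrow> v \<notin> H' \<longrightarrow> u + v \<in> H'"
      proof (intro allI impI)
        fix u v assume u: "u \<notin> H'" and v: "v \<notin> H'"
        let ?S = "H' \<union> (\<lambda>h. u + h) ` H'"
        have Sz: "(0::'a) \<in> ?S" using z0 by simp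
        have Scl: "\<forall>x\<in>?S. \<forall>y\<in>?S. x + y \<in> ?S"
        proof (intro ballI)
          fix x y assume x: "x \<in> ?S" and y: "y \<in> ?S"
          show "x + y \<in> ?S"
          proof (cases "x \<in> H'")
            case True
            show ?thesis
            proof (cases "y \<in> H'")
              case True then show ?thesis using \<open>x \<in> H'\<close> cl by blast
            next
              case False
              then obtain h where h: "h \<in> H'" "y = u + h" using y by auto
              have e: "x + y = u + (x + h)" using h by (simp add: algebra_simps)
              have "x + h \<in> H'" using cl h(1) \<open>x \<in> H'\<close> by blast
              then have "u + (x + h) \<in> ?S" by blast
              then show ?thesis unfolding e .
            qed
          next
            case False
            then obtain h where h: "h \<in> H'" "x = u + h" using x by auto
            show ?thesis
            proof (cases "y \<in> H'")
              case True
              have e: "x + y = u + (h + y)" using h by (simp add: algebra_simps)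
              have "h + y \<in> H'" using cl h(1) True by blast
              then have "u + (h + y) \<in> ?S" by blast
              then show ?thesis unfolding e .
            next
              case False
              then obtain k where k: "k \<in> H'" "y = u + k" using y by auto
              have "x + y = (u + u) + (h + k)" using h k by (simp add: algebra_simps)
              also have "\<dots> = h + k" unfolding c2_self[OF c2] by simp
              finally have e: "x + y = h + k" .
              have "h + k \<in> H'" using cl h(1) k(1) by blast
              then have "h + k \<in> ?S" by blast
              then show ?thesis unfolding e .
            qed
          qed
        qed
        have Lsub: "subgroup (Pair (0::'a) ` ?S) G" unfolding G_def by (rule Zsub[OF fa c2 Sz Scl])
        have "H \<subseteq> Pair (0::'a) ` ?S" using HH by auto
        moreover have "Pair (0::'a) ` ?S \<subseteq> center G" unfolding Z by auto
        moreover have "Pair (0::'a) ` ?S \<noteq> H"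
        proof
          assume "Pair (0::'a) ` ?S = H"
          moreover have "(0, u) \<in> Pair (0::'a) ` ?S" using z0 by (metis UnI2 add_0_right image_eqI)
          ultimately show False using mem u by simp
        qed
        ultimately have SZ: "Pair (0::'a) ` ?S = center G" using mx[OF Lsub] by blast
        have "(0, v) \<in> Pair (0::'a) ` ?S" unfolding SZ by (rule ZI)
        then have "v \<in> ?S" by auto
        then obtain h where "h \<in> H'" "v = u + h" using v by auto
        then show "u + v \<in> H'" by (metis c2_cancel[OF c2])
      qed
      have P: "P2 H'" unfolding P2_def using z0 cl ix by blast
      have nU: "H' \<noteq> UNIV"
      proof
        assume "H' = UNIV"
        then have "H = center G" unfolding HH Zimg by simp
        then show False using HnZ by simp
      qed
      obtain a where a: "a \<noteq> 0" "H' = Imf \<theta> a" using all_hyper[OF card odd g c2 P nU] by blast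
      show "\<exists>x \<in> carrier G - center G. H = comm_sub G x"
      proof (rule bexI[of _ "(a, 0)"])
        show "H = comm_sub G (a, 0)" using CS HH a by simp
        show "(a, 0) \<in> carrier G - center G" using nZ a by simp
      qed
    qed
    show "\<forall>x \<in> carrier G - center G. \<forall>x' \<in> carrier G - center G.
            comm_sub G x = comm_sub G x' \<longleftrightarrow> x <#\<^bsub>G\<^esub> center G = x' <#\<^bsub>G\<^esub> center G"
    proof (intro ballI)
      fix x x' assume "x \<in> carrier G - center G" "x' \<in> carrier G - center G"
      then obtain a b a' b' where x: "x = (a, b)" "a \<noteq> 0" and x': "x' = (a', b')" "a' \<noteq> 0"
        using nZ by (cases x, cases x') auto
      have cos: "(c, d) <#\<^bsub>G\<^esub> center G = {p. fst p = c}" for c d :: 'a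
      proof -
        have "(c, d) <#\<^bsub>G\<^esub> center G = (\<Union>h\<in>center G. {(c, d) \<otimes>\<^bsub>G\<^esub> h})" by (simp add: l_coset_def)
        also have "\<dots> = {p. fst p = c}"
        proof
          show "(\<Union>h\<in>center G. {(c, d) \<otimes>\<^bsub>G\<^esub> h}) \<subseteq> {p. fst p = c}"
            unfolding Zimg by (auto simp: G_def aut_0[OF fa])
          show "{p. fst p = c} \<subseteq> (\<Union>h\<in>center G. {(c, d) \<otimes>\<^bsub>G\<^esub> h})"
          proof
            fix p :: "'a \<times> 'a" assume "p \<in> {p. fst p = c}"
            then obtain e where p: "p = (c, e)" by (cases p) auto
            have "p = (c, d) \<otimes>\<^bsub>G\<^esub> (0, d + e)"
              unfolding G_def using p c2_cancel[OF c2] by (simp add: aut_0[OF fa])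
            moreover have "(0, d + e) \<in> center G" by (rule ZI)
            ultimately show "p \<in> (\<Union>h\<in>center G. {(c, d) \<otimes>\<^bsub>G\<^esub> h})" by blast
          qed
        qed
        finally show ?thesis .
      qed
      have "comm_sub G x = comm_sub G x' \<longleftrightarrow> Imf \<theta> a = Imf \<theta> a'"
        using CS x x' by (auto simp: inj_image_eq_iff inj_on_def)
      also have "\<dots> \<longleftrightarrow> a = a'" using Imf_inj[OF card odd g c2 x(2) x'(2)] by blast
      also have "\<dots> \<longleftrightarrow> x <#\<^bsub>G\<^esub> center G = x' <#\<^bsub>G\<^esub> center G"
      proof
        assume "a = a'" then show "x <#\<^bsub>G\<^esub> center G = x' <#\<^bsub>G\<^esub> center G" using cos x x' by simp
      next
        assume "x <#\<^bsub>G\<^esub> center G = x' <#\<^bsub>G\<^esub> center G"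
        then have "{p. fst p = a} = {p::'a\<times>'a. fst p = a'}" using cos x x' by simp
        then show "a = a'" by (metis fst_conv mem_Collect_eq)
      qed
      finally show "comm_sub G x = comm_sub G x' \<longleftrightarrow> x <#\<^bsub>G\<^esub> center G = x' <#\<^bsub>G\<^esub> center G" .
    qed
  qed
qed

end
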